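(* Let $a,b\in\mathbb{R}\setminus\{0\}$, $s\le t$, and let $$m=\int_s^t\int_s^\sigma e^{ia\sigma}e^{ib\sigma_1}d\sigma_1\,d\sigma-I_{a+b=0}\frac{t-s}{ib}.$$ If $\gamma\in[0,1/2]$ then $$|m|\lesssim\frac{|t-s|^{2\gamma}}{|b|^{\gamma}|a|^{1-\gamma}|a+b|^{1-2\gamma}}+\frac{|t-s|^{2\gamma}}{|a|^{1-\gamma}|b|^{1-\gamma}}.$$
   Context: $I_{a+b=0}$ is $1$ if $a+b=0$ and $0$ otherwise; the implicit constant is independent of $a,b,s,t$. When $a+b=0$ and $\gamma<1/2$ the first term on the right is interpreted as $+\infty$. *)

theory Defs
  imports "HOL-Analysis.Analysis"
begin

text \<open>Real power with the convention 0 to the power 0 equals 1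
  (Isabelle's powr has 0 powr 0 = 0).\<close>
definition rpow :: "real \<Rightarrow> real \<Rightarrow> real" where
  "rpow x p = (if p = 0 then 1 else x powr p)"

definition mterm :: "real \<Rightarrow> real \<Rightarrow> real \<Rightarrow> real \<Rightarrow> complex" where
  "mterm a b s t =
     integral {s..t} (\<lambda>\<sigma>. exp (\<i> * of_real (a * \<sigma>)) *
        integral {s..\<sigma>} (\<lambda>\<sigma>\<^sub>1. exp (\<i> * of_real (b * \<sigma>\<^sub>1))))
     - (if a + b = 0 then of_real (t - s) / (\<i> * of_real b) else 0)"

end

theory Submission
  imports Defs
begin

lemma dexp: "((\<lambda>x::real. exp (\<i> * of_real (c * x)) / (\<i> * of_real c)) has_vector_derivative exp (\<i> * of_real (c * x))) (at x within S)" if "c \<noteq> 0"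
proof -
  have "((\<lambda>z. exp (\<i> * (of_real c * z)) / (\<i> * of_real c)) has_field_derivative (\<i> * of_real c) * exp (\<i> * (of_real c * of_real x)) / (\<i> * of_real c)) (at (of_real x))"
    by (auto intro!: derivative_eq_intros simp: mult.commute mult.left_commute)
  from has_vector_derivative_real_field[OF this, of S] show ?thesis using that by (simp add: mult.commute mult.left_commute)
qed

lemma Eint: assumes "c \<noteq> 0" "s \<le> t"
  shows "((\<lambda>x::real. exp (\<i> * of_real (c * x))) has_integral
     ((exp (\<i> * of_real (c * t)) - exp (\<i> * of_real (c * s))) / (\<i> * of_real c))) {s..t}"
proof -
  have "((\<lambda>x::real. exp (\<i> * of_real (c * x))) has_integral
     (exp (\<i> * of_real (c * t)) / (\<i> * of_real c) - exp (\<i> * of_real (c * s)) / (\<i> * of_real c))) {s..t}"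
    by (rule fundamental_theorem_of_calculus[OF assms(2)]) (use dexp[OF assms(1)] in blast)
  then show ?thesis by (simp add: diff_divide_distrib)
qed

lemma Eint0: "s \<le> t \<Longrightarrow> ((\<lambda>x::real. exp (\<i> * of_real (0*x))) has_integral of_real (t - s)) {s..t}"
  using has_integral_const_real[of "1::complex" s t] by (simp add: scaleR_conv_of_real)

lemma Enorm: assumes "s \<le> t"
  shows "cmod (integral {s..t} (\<lambda>x::real. exp (\<i> * of_real (c * x)))) \<le> t - s"
proof -
  have "cmod (integral {s..t} (\<lambda>x::real. exp (\<i> * of_real (c * x)))) \<le> 1 * (t - s)"
    apply (rule integral_bound[OF assms]) 
    by (auto intro!: continuous_intros simp: norm_exp_i_times[simplified])
  then show ?thesis using assms by simp
qed

lemma Enorm2: assumes "s \<le> t" "c \<noteq> 0"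
  shows "cmod (integral {s..t} (\<lambda>x::real. exp (\<i> * of_real (c * x)))) \<le> 2 / \<bar>c\<bar>"
proof -
  have "integral {s..t} (\<lambda>x::real. exp (\<i> * of_real (c * x))) = (exp (\<i> * of_real (c * t)) - exp (\<i> * of_real (c * s))) / (\<i> * of_real c)"
    using Eint[OF assms(2,1)] by blast
  also have "cmod \<dots> \<le> 2 / \<bar>c\<bar>"
  proof -
    have "cmod (exp (\<i> * of_real (c * t)) - exp (\<i> * of_real (c * s))) \<le> 2"
      using norm_triangle_ineq4[of "exp (\<i> * of_real (c * t))" "exp (\<i> * of_real (c * s))"]
      by (simp add: norm_exp_i_times[simplified])
    then show ?thesis by (simp add: norm_divide norm_mult divide_right_mono)
  qed
  finally show ?thesis .
qed

lemma hlp: "(e1::complex) * ((e2 - y) / d) = (e1 * e2 - y * e1) / d"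
  by (simp add: right_diff_distrib diff_divide_distrib mult.commute)

lemma alg: fixes X X' Y Y' a b c :: complex assumes "a \<noteq> 0" "b \<noteq> 0" "c \<noteq> 0" "c = a + b"
  shows "((X'*Y' - X*Y)/(\<i>*c) - Y*((X'-X)/(\<i>*a)))/(\<i>*b) = (X'*((Y'-Y)/(\<i>*b)) - (X'*Y'-X*Y)/(\<i>*c))/(\<i>*a)"
proof -
  have "((X'*Y' - X*Y)/(\<i>*c) - Y*((X'-X)/(\<i>*a)))/(\<i>*b) = - (a*(X'*Y' - X*Y) - c*Y*(X'-X))/(a*b*c)"
    using assms(1-3) by (simp add: field_simps)
  also have "\<dots> = - (c*X'*(Y'-Y) - b*(X'*Y'-X*Y))/(a*b*c)"
    using assms(4) by (simp add: algebra_simps)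
  also have "\<dots> = (X'*((Y'-Y)/(\<i>*b)) - (X'*Y'-X*Y)/(\<i>*c))/(\<i>*a)"
    using assms(1-3) by (simp add: field_simps)
  finally show ?thesis .
qed

lemma rpow_pos: "x > 0 \<Longrightarrow> rpow x p = x powr p" by (simp add: rpow_def)

lemma K: assumes "T \<ge> 0" "x > 0" "0 \<le> \<theta>" "\<theta> \<le> 1"
  shows "min T x \<le> rpow T \<theta> * x powr (1 - \<theta>)"
proof (cases "\<theta> = 0")
  case True then show ?thesis using assms by (simp add: rpow_def)
next
  case False
  then have r: "rpow T \<theta> = T powr \<theta>" by (simp add: rpow_def)
  show ?thesis
  proof (cases "T = 0")
    case True then show ?thesis using assms r by simp
  next
    case Tn: False
    show ?thesis
    proof (cases "T \<le> x")
      case True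
      have "T = T powr \<theta> * T powr (1 - \<theta>)" using Tn assms by (simp add: powr_add[symmetric])
      also have "\<dots> \<le> T powr \<theta> * x powr (1 - \<theta>)"
        using True assms by (intro mult_left_mono powr_mono2) auto
      finally show ?thesis using r True by simp
    next
      case False
      have "x = x powr \<theta> * x powr (1 - \<theta>)" using assms by (simp add: powr_add[symmetric])
      also have "\<dots> \<le> T powr \<theta> * x powr (1 - \<theta>)"
        using False assms by (intro mult_right_mono powr_mono2) auto
      finally show ?thesis using r False by simp
    qed
  qed
qed

lemma K2: assumes "T \<ge> 0" "c > 0" "0 \<le> \<gamma>" "\<gamma> \<le> 1/2"
  shows "min T (2/c) \<le> 2 * rpow T (2*\<gamma>) / c powr (1 - 2*\<gamma>)"
proof -
  have P: "rpow T (2*\<gamma>) \<ge> 0" by (simp add: rpow_def)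
  have "min T (2/c) \<le> rpow T (2*\<gamma>) * (2/c) powr (1 - 2*\<gamma>)"
    using K[of T "2/c" "2*\<gamma>"] assms by simp
  also have "\<dots> = rpow T (2*\<gamma>) * 2 powr (1 - 2*\<gamma>) / c powr (1 - 2*\<gamma>)"
    using assms by (simp add: powr_divide)
  also have "\<dots> \<le> rpow T (2*\<gamma>) * 2 / c powr (1 - 2*\<gamma>)"
  proof -
    have "(2::real) powr (1 - 2*\<gamma>) \<le> 2 powr 1" using assms by (intro powr_mono) auto
    then show ?thesis using P by (intro divide_right_mono mult_left_mono) auto
  qed
  finally show ?thesis by (simp add: mult.commute)
qed

lemma main_real:
  fixes \<alpha> \<beta> \<kappa> T \<gamma> m e\<alpha> e\<beta> e\<kappa> :: real
  assumes pos: "\<alpha> > 0" "\<beta> > 0" "\<kappa> > 0" "T \<ge> 0" "0 \<le> \<gamma>" "\<gamma> \<le> 1/2"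
    and ea: "e\<alpha> \<le> min T (2/\<alpha>)" and eb: "e\<beta> \<le> min T (2/\<beta>)" and ek: "e\<kappa> \<le> min T (2/\<kappa>)"
    and m1: "m \<le> (e\<kappa> + e\<alpha>) / \<beta>" and m2: "m \<le> (e\<beta> + e\<kappa>) / \<alpha>"
  shows "m \<le> 2 * (rpow T (2*\<gamma>) / (\<beta> powr \<gamma> * \<alpha> powr (1-\<gamma>) * \<kappa> powr (1 - 2*\<gamma>))
      + rpow T (2*\<gamma>) / (\<alpha> powr (1-\<gamma>) * \<beta> powr (1-\<gamma>)))"
proof -
  define P where "P = rpow T (2*\<gamma>)"
  have P: "P \<ge> 0" by (simp add: P_def rpow_def)
  define p where "p = 1 - 2*\<gamma>"
  have ea': "e\<alpha> \<le> 2*P / \<alpha> powr p" using ea K2[of T \<alpha> \<gamma>] pos unfolding P_def p_def by linarith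
  have eb': "e\<beta> \<le> 2*P / \<beta> powr p" using eb K2[of T \<beta> \<gamma>] pos unfolding P_def p_def by linarith
  have ek': "e\<kappa> \<le> 2*P / \<kappa> powr p" using ek K2[of T \<kappa> \<gamma>] pos unfolding P_def p_def by linarith
  have sa: "\<alpha> = \<alpha> powr \<gamma> * \<alpha> powr (1-\<gamma>)" using pos by (simp add: powr_add[symmetric])
  have sb: "\<beta> = \<beta> powr \<gamma> * \<beta> powr (1-\<gamma>)" using pos by (simp add: powr_add[symmetric])
  have sa2: "\<alpha> powr (1-\<gamma>) = \<alpha> powr p * \<alpha> powr \<gamma>" using pos by (simp add: p_def powr_add[symmetric])
  have sb2: "\<beta> powr (1-\<gamma>) = \<beta> powr p * \<beta> powr \<gamma>" using pos by (simp add: p_def powr_add[symmetric])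
  have posi: "\<alpha> powr x > 0" "\<beta> powr x > 0" "\<kappa> powr x > 0" for x using pos by auto
  show ?thesis
  proof (cases "\<alpha> \<le> \<beta>")
    case True
    have g1: "\<alpha> powr \<gamma> \<le> \<beta> powr \<gamma>" "\<alpha> powr (1-\<gamma>) \<le> \<beta> powr (1-\<gamma>)"
      using True pos by (auto intro!: powr_mono2)
    have t1: "2*P/\<kappa> powr p / \<beta> \<le> 2 * (P / (\<beta> powr \<gamma> * \<alpha> powr (1-\<gamma>) * \<kappa> powr p))"
    proof -
      have "\<beta> powr \<gamma> * \<alpha> powr (1-\<gamma>) * \<kappa> powr p \<le> \<beta> * \<kappa> powr p"
      proof -
        have "\<beta> powr \<gamma> * \<alpha> powr (1-\<gamma>) * \<kappa> powr p \<le> \<beta> powr \<gamma> * \<beta> powr (1-\<gamma>) * \<kappa> powr p"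
          using g1 posi by (intro mult_right_mono mult_left_mono) auto
        then show ?thesis by (simp add: sb[symmetric])
      qed
      then have "P / (\<beta> * \<kappa> powr p) \<le> P / (\<beta> powr \<gamma> * \<alpha> powr (1-\<gamma>) * \<kappa> powr p)"
        using P posi pos by (intro divide_left_mono) auto
      moreover have "2*P/\<kappa> powr p/\<beta> = 2*(P/(\<beta> * \<kappa> powr p))" by (simp add: mult.commute)
      ultimately show ?thesis by linarith
    qed
    have t2: "2*P/\<alpha> powr p / \<beta> \<le> 2 * (P / (\<alpha> powr (1-\<gamma>) * \<beta> powr (1-\<gamma>)))"
    proof -
      have "\<alpha> powr (1-\<gamma>) * \<beta> powr (1-\<gamma>) \<le> \<alpha> powr p * \<beta>"
      proof -
        have "\<alpha> powr (1-\<gamma>) * \<beta> powr (1-\<gamma>) = \<alpha> powr p * (\<alpha> powr \<gamma> * \<beta> powr (1-\<gamma>))"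
          using sa2 by simp
        also have "\<dots> \<le> \<alpha> powr p * (\<beta> powr \<gamma> * \<beta> powr (1-\<gamma>))"
          using g1 posi by (intro mult_right_mono mult_left_mono) auto
        finally show ?thesis by (simp add: sb[symmetric])
      qed
      then have "P / (\<alpha> powr p * \<beta>) \<le> P / (\<alpha> powr (1-\<gamma>) * \<beta> powr (1-\<gamma>))"
        using P posi pos by (intro divide_left_mono) auto
      moreover have "2*P/\<alpha> powr p/\<beta> = 2*(P/(\<alpha> powr p * \<beta>))" by (simp add: mult.commute)
      ultimately show ?thesis by linarith
    qed
    have "m \<le> (2*P/\<kappa> powr p + 2*P/\<alpha> powr p) / \<beta>"
      using m1 ea' ek' pos by (smt (verit) divide_right_mono)
    also have "\<dots> = 2*P/\<kappa> powr p / \<beta> + 2*P/\<alpha> powr p / \<beta>" by (simp add: add_divide_distrib)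
    also have "\<dots> \<le> 2 * (P / (\<beta> powr \<gamma> * \<alpha> powr (1-\<gamma>) * \<kappa> powr p)) + 2 * (P / (\<alpha> powr (1-\<gamma>) * \<beta> powr (1-\<gamma>)))"
      using t1 t2 by linarith
    finally show ?thesis unfolding P_def p_def by (simp only: distrib_left)
  next
    case False
    have g1: "\<beta> powr \<gamma> \<le> \<alpha> powr \<gamma>" "\<beta> powr (1-\<gamma>) \<le> \<alpha> powr (1-\<gamma>)"
      using False pos by (auto intro!: powr_mono2)
    have t1: "2*P/\<kappa> powr p / \<alpha> \<le> 2 * (P / (\<beta> powr \<gamma> * \<alpha> powr (1-\<gamma>) * \<kappa> powr p))"
    proof -
      have "\<beta> powr \<gamma> * \<alpha> powr (1-\<gamma>) * \<kappa> powr p \<le> \<alpha> * \<kappa> powr p"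
      proof -
        have "\<beta> powr \<gamma> * \<alpha> powr (1-\<gamma>) * \<kappa> powr p \<le> \<alpha> powr \<gamma> * \<alpha> powr (1-\<gamma>) * \<kappa> powr p"
          using g1 posi by (intro mult_right_mono mult_left_mono) auto
        then show ?thesis by (simp add: sa[symmetric])
      qed
      then have "P / (\<alpha> * \<kappa> powr p) \<le> P / (\<beta> powr \<gamma> * \<alpha> powr (1-\<gamma>) * \<kappa> powr p)"
        using P posi pos by (intro divide_left_mono) auto
      moreover have "2*P/\<kappa> powr p/\<alpha> = 2*(P/(\<alpha> * \<kappa> powr p))" by (simp add: mult.commute)
      ultimately show ?thesis by linarith
    qed
    have t2: "2*P/\<beta> powr p / \<alpha> \<le> 2 * (P / (\<alpha> powr (1-\<gamma>) * \<beta> powr (1-\<gamma>)))"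
    proof -
      have "\<alpha> powr (1-\<gamma>) * \<beta> powr (1-\<gamma>) \<le> \<beta> powr p * \<alpha>"
      proof -
        have "\<alpha> powr (1-\<gamma>) * \<beta> powr (1-\<gamma>) = \<beta> powr p * (\<beta> powr \<gamma> * \<alpha> powr (1-\<gamma>))"
          using sb2 by simp
        also have "\<dots> \<le> \<beta> powr p * (\<alpha> powr \<gamma> * \<alpha> powr (1-\<gamma>))"
          using g1 posi by (intro mult_right_mono mult_left_mono) auto
        finally show ?thesis by (simp add: sa[symmetric])
      qed
      then have "P / (\<beta> powr p * \<alpha>) \<le> P / (\<alpha> powr (1-\<gamma>) * \<beta> powr (1-\<gamma>))"
        using P posi pos by (intro divide_left_mono) auto
      moreover have "2*P/\<beta> powr p/\<alpha> = 2*(P/(\<beta> powr p * \<alpha>))" by (simp add: mult.commute)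
      ultimately show ?thesis by linarith
    qed
    have "m \<le> (2*P/\<beta> powr p + 2*P/\<kappa> powr p) / \<alpha>"
      using m2 eb' ek' pos by (smt (verit) divide_right_mono)
    also have "\<dots> = 2*P/\<beta> powr p / \<alpha> + 2*P/\<kappa> powr p / \<alpha>" by (simp add: add_divide_distrib)
    also have "\<dots> \<le> 2 * (P / (\<beta> powr \<gamma> * \<alpha> powr (1-\<gamma>) * \<kappa> powr p)) + 2 * (P / (\<alpha> powr (1-\<gamma>) * \<beta> powr (1-\<gamma>)))"
      using t2 t1 by linarith
    finally show ?thesis unfolding P_def p_def by (simp only: distrib_left)
  qed
qed

theorem lemma8:
  "\<exists>C>0. \<forall>(a::real) (b::real) (s::real) (t::real) (\<gamma>::real).
     a \<noteq> 0 \<longrightarrow> b \<noteq> 0 \<longrightarrow> s \<le> t \<longrightarrow> 0 \<le> \<gamma> \<longrightarrow> \<gamma> \<le> 1/2 \<longrightarrow>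
     (a + b \<noteq> 0 \<or> \<gamma> = 1/2) \<longrightarrow>
     cmod (mterm a b s t) \<le> C * (
        rpow \<bar>t - s\<bar> (2*\<gamma>) / (rpow \<bar>b\<bar> \<gamma> * rpow \<bar>a\<bar> (1-\<gamma>) * rpow \<bar>a + b\<bar> (1 - 2*\<gamma>))
      + rpow \<bar>t - s\<bar> (2*\<gamma>) / (rpow \<bar>a\<bar> (1-\<gamma>) * rpow \<bar>b\<bar> (1-\<gamma>)))"
proof (intro exI[of _ 2] conjI allI impI)
  fix a b s t \<gamma> :: real
  assume an: "a \<noteq> 0" and bn: "b \<noteq> 0" and st: "s \<le> t" and g0: "0 \<le> \<gamma>" and g1: "\<gamma> \<le> 1/2"
    and hab: "a + b \<noteq> 0 \<or> \<gamma> = 1/2"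
  define T where "T = t - s"
  have T0: "T \<ge> 0" and absT: "\<bar>t - s\<bar> = T" using st by (auto simp: T_def)
  define Ec where "Ec c = integral {s..t} (\<lambda>x::real. exp (\<i> * of_real (c * x)))" for c
  define Y where "Y = exp (\<i> * of_real (b * s))"
  have nY: "cmod Y = 1" unfolding Y_def by (simp add: norm_exp_i_times[simplified])
  have hE: "((\<lambda>x::real. exp (\<i> * of_real (c * x))) has_integral Ec c) {s..t}" for c
    unfolding Ec_def by (intro integrable_integral integrable_continuous_interval continuous_intros)
  have inner: "integral {s..\<sigma>} (\<lambda>y::real. exp (\<i> * of_real (b * y))) = (exp (\<i> * of_real (b * \<sigma>)) - Y) / (\<i> * of_real b)"
    if "\<sigma> \<in> {s..t}" for \<sigma>
    using Eint[OF bn, of s \<sigma>] that unfolding Y_def by (auto intro: integral_unique)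
  have cong: "exp (\<i> * of_real (a * \<sigma>)) * integral {s..\<sigma>} (\<lambda>y::real. exp (\<i> * of_real (b * y)))
      = (exp (\<i> * of_real ((a + b) * \<sigma>)) - Y * exp (\<i> * of_real (a * \<sigma>))) / (\<i> * of_real b)"
    if "\<sigma> \<in> {s..t}" for \<sigma>
  proof -
    have h: "exp (\<i> * of_real ((a + b) * \<sigma>)) = exp (\<i> * of_real (a * \<sigma>)) * exp (\<i> * of_real (b * \<sigma>))"
      by (simp add: exp_add[symmetric] distrib_right ring_distribs)
    show ?thesis unfolding inner[OF that] h by (rule hlp)
  qed
  have "((\<lambda>\<sigma>. (exp (\<i> * of_real ((a + b) * \<sigma>)) - Y * exp (\<i> * of_real (a * \<sigma>))) / (\<i> * of_real b))
      has_integral ((Ec (a + b) - Y * Ec a) / (\<i> * of_real b))) {s..t}" (is "(?g has_integral _) _")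
    by (intro has_integral_divide has_integral_diff has_integral_mult_right hE)
  note hI = this
  have I: "integral {s..t} (\<lambda>\<sigma>. exp (\<i> * of_real (a * \<sigma>)) * integral {s..\<sigma>} (\<lambda>y::real. exp (\<i> * of_real (b * y))))
      = (Ec (a + b) - Y * Ec a) / (\<i> * of_real b)"
  proof -
    have "integral {s..t} (\<lambda>\<sigma>. exp (\<i> * of_real (a * \<sigma>)) * integral {s..\<sigma>} (\<lambda>y::real. exp (\<i> * of_real (b * y))))
      = integral {s..t} ?g" by (rule integral_cong) (rule cong)
    also have "\<dots> = (Ec (a + b) - Y * Ec a) / (\<i> * of_real b)" by (rule integral_unique[OF hI])
    finally show ?thesis .
  qed
  have mf: "mterm a b s t = (Ec (a + b) - Y * Ec a) / (\<i> * of_real b) - (if a + b = 0 then of_real (t - s) / (\<i> * of_real b) else 0)"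
    unfolding mterm_def I ..
  have Emin: "cmod (Ec c) \<le> min T (2 / \<bar>c\<bar>)" if "c \<noteq> 0" for c
    using Enorm[OF st, of c] Enorm2[OF st that] unfolding Ec_def T_def by simp
  show "cmod (mterm a b s t) \<le> 2 * (
        rpow \<bar>t - s\<bar> (2*\<gamma>) / (rpow \<bar>b\<bar> \<gamma> * rpow \<bar>a\<bar> (1-\<gamma>) * rpow \<bar>a + b\<bar> (1 - 2*\<gamma>))
      + rpow \<bar>t - s\<bar> (2*\<gamma>) / (rpow \<bar>a\<bar> (1-\<gamma>) * rpow \<bar>b\<bar> (1-\<gamma>)))"
  proof (cases "a + b = 0")
    case True
    then have g: "\<gamma> = 1/2" using hab by simp
    have ab: "\<bar>a\<bar> = \<bar>b\<bar>" using True by linarith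
    have "Ec (a + b) = of_real (t - s)"
    proof -
      have "Ec (a + b) = Ec 0" using True by simp
      also have "\<dots> = of_real (t - s)" unfolding Ec_def by (rule integral_unique[OF Eint0[OF st]])
      finally show ?thesis .
    qed
    then have "mterm a b s t = - (Y * Ec a) / (\<i> * of_real b)"
      using mf True by (simp add: diff_divide_distrib)
    then have "cmod (mterm a b s t) = cmod (Ec a) / \<bar>b\<bar>"
      by (simp add: norm_divide norm_mult nY)
    also have "\<dots> \<le> T / \<bar>b\<bar>" using Emin[OF an] by (simp add: divide_right_mono)
    finally have m: "cmod (mterm a b s t) \<le> T / \<bar>b\<bar>" .
    have bp: "\<bar>b\<bar> > 0" using bn by simp
    have hb: "\<bar>b\<bar> powr (1/2) * \<bar>b\<bar> powr (1/2) = \<bar>b\<bar>" using bp by (simp add: powr_add[symmetric])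
    have rT: "rpow T 1 = T" using T0 by (simp add: rpow_def)
    have eq1: "rpow \<bar>t - s\<bar> (2*\<gamma>) / (rpow \<bar>b\<bar> \<gamma> * rpow \<bar>a\<bar> (1-\<gamma>) * rpow \<bar>a + b\<bar> (1 - 2*\<gamma>)) = T / \<bar>b\<bar>"
      unfolding g absT using ab bp rT hb True by (simp add: rpow_pos rpow_def[of 0])
    have eq2: "rpow \<bar>t - s\<bar> (2*\<gamma>) / (rpow \<bar>a\<bar> (1-\<gamma>) * rpow \<bar>b\<bar> (1-\<gamma>)) = T / \<bar>b\<bar>"
      unfolding g absT using ab bp rT hb True by (simp add: rpow_pos rpow_def[of 0])
    have nn: "T / \<bar>b\<bar> \<ge> 0" using T0 by simp
    show ?thesis unfolding eq1 eq2 by (rule order_trans[OF m]) (use T0 in \<open>simp add: divide_right_mono\<close>)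
  next
    case False
    have mf1: "mterm a b s t = (Ec (a + b) - Y * Ec a) / (\<i> * of_real b)" using mf False by simp
    have m1: "cmod (mterm a b s t) \<le> (cmod (Ec (a + b)) + cmod (Ec a)) / \<bar>b\<bar>"
      unfolding mf1 norm_divide
      using norm_triangle_ineq4[of "Ec (a + b)" "Y * Ec a"] by (simp add: norm_mult nY divide_right_mono)
    define X where "X = exp (\<i> * of_real (a * s))"
    define X' where "X' = exp (\<i> * of_real (a * t))"
    define Y' where "Y' = exp (\<i> * of_real (b * t))"
    have Ea: "Ec a = (X' - X) / (\<i> * of_real a)"
      using Eint[OF an st] unfolding Ec_def X_def X'_def by (auto intro: integral_unique)
    have Eb: "Ec b = (Y' - Y) / (\<i> * of_real b)"
      using Eint[OF bn st] unfolding Ec_def Y_def Y'_def by (auto intro: integral_unique)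
    have Eab: "Ec (a + b) = (X' * Y' - X * Y) / (\<i> * of_real (a + b))"
    proof -
      have e1: "exp (\<i> * of_real ((a + b) * t)) = X' * Y'" unfolding X'_def Y'_def
        by (simp add: exp_add[symmetric] distrib_right ring_distribs)
      have e2: "exp (\<i> * of_real ((a + b) * s)) = X * Y" unfolding X_def Y_def
        by (simp add: exp_add[symmetric] distrib_right ring_distribs)
      show ?thesis using Eint[OF False st] unfolding Ec_def e1 e2 by (auto intro: integral_unique)
    qed
    have mf2: "mterm a b s t = (X' * Ec b - Ec (a + b)) / (\<i> * of_real a)"
      unfolding mf1 Ea Eb Eab
    proof (rule alg)
      show "complex_of_real (a + b) \<noteq> 0" using False by (metis of_real_eq_0_iff)
    qed (use an bn in auto)
    have nX': "cmod X' = 1" unfolding X'_def by (simp add: norm_exp_i_times[simplified])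
    have m2: "cmod (mterm a b s t) \<le> (cmod (Ec b) + cmod (Ec (a + b))) / \<bar>a\<bar>"
      unfolding mf2 norm_divide
      using norm_triangle_ineq4[of "X' * Ec b" "Ec (a + b)"] by (simp add: norm_mult nX' divide_right_mono)
    have R: "cmod (mterm a b s t) \<le> 2 * (rpow T (2*\<gamma>) / (\<bar>b\<bar> powr \<gamma> * \<bar>a\<bar> powr (1-\<gamma>) * \<bar>a + b\<bar> powr (1 - 2*\<gamma>))
      + rpow T (2*\<gamma>) / (\<bar>a\<bar> powr (1-\<gamma>) * \<bar>b\<bar> powr (1-\<gamma>)))"
      by (rule main_real[OF _ _ _ T0 g0 g1 Emin[OF an] Emin[OF bn] Emin[OF False] m1 m2]) (use an bn False in auto)
    have pos: "\<bar>a\<bar> > 0" "\<bar>b\<bar> > 0" "\<bar>a + b\<bar> > 0" using an bn False by auto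
    show ?thesis using R unfolding absT rpow_pos[OF pos(1)] rpow_pos[OF pos(2)] rpow_pos[OF pos(3)] .
  qed
qed simp

end
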